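(* A (finite) tree $T$ is semi--H--cordial if and only if $T$ has an odd number of vertices.
   Context: A labeling of a graph $G$ is a map $f:E(G)\to\{-1,+1\}$. Given a labeling $f$, for each vertex $v$ define $f(v)=\sum_{e\in I(v)} f(e)$, where $I(v)$ is the set of edges incident to $v$. For an integer $c$, $e_f(c)$ denotes the number of edges with label $c$, and $v_f(c)$ the number of vertices $v$ with $f(v)=c$. A labeling $f$ of a tree $T$ is semi--H--cordial if $|f(v)|\le 1$ for every vertex $v$, $|e_f(1)-e_f(-1)|\le 1$, and $|v_f(1)-v_f(-1)|\le 1$. A tree is semi--H--cordial if it admits a semi--H--cordial labeling. *)

theory Defs
  imports Main
begin

definition simple_graph :: "'a set \<Rightarrow> 'a set set \<Rightarrow> bool" where
  "simple_graph V E \<longleftrightarrow> finite V \<and> (\<forall>e\<in>E. e \<subseteq> V \<and> card e = 2)"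

definition adj :: "'a set set \<Rightarrow> 'a \<Rightarrow> 'a \<Rightarrow> bool" where
  "adj E u v \<longleftrightarrow> {u, v} \<in> E"

definition connected_graph :: "'a set \<Rightarrow> 'a set set \<Rightarrow> bool" where
  "connected_graph V E \<longleftrightarrow> (\<forall>u\<in>V. \<forall>v\<in>V. (adj E)\<^sup>*\<^sup>* u v)"

definition is_cycle :: "'a set set \<Rightarrow> 'a list \<Rightarrow> bool" where
  "is_cycle E cs \<longleftrightarrow> length cs \<ge> 3 \<and> distinct cs
     \<and> (\<forall>i. Suc i < length cs \<longrightarrow> adj E (cs ! i) (cs ! Suc i))
     \<and> adj E (last cs) (hd cs)"

definition acyclic_graph :: "'a set set \<Rightarrow> bool" where
  "acyclic_graph E \<longleftrightarrow> \<not> (\<exists>cs. is_cycle E cs)"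

definition is_tree :: "'a set \<Rightarrow> 'a set set \<Rightarrow> bool" where
  "is_tree V E \<longleftrightarrow> simple_graph V E \<and> V \<noteq> {} \<and> connected_graph V E \<and> acyclic_graph E"

definition labeling :: "'a set set \<Rightarrow> ('a set \<Rightarrow> int) \<Rightarrow> bool" where
  "labeling E f \<longleftrightarrow> (\<forall>e\<in>E. f e \<in> {-1, 1})"

definition vlabel :: "'a set set \<Rightarrow> ('a set \<Rightarrow> int) \<Rightarrow> 'a \<Rightarrow> int" where
  "vlabel E f v = (\<Sum>e\<in>{e\<in>E. v \<in> e}. f e)"

definition e_f :: "'a set set \<Rightarrow> ('a set \<Rightarrow> int) \<Rightarrow> int \<Rightarrow> nat" where
  "e_f E f c = card {e\<in>E. f e = c}"

definition v_f :: "'a set \<Rightarrow> 'a set set \<Rightarrow> ('a set \<Rightarrow> int) \<Rightarrow> int \<Rightarrow> nat" where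
  "v_f V E f c = card {v\<in>V. vlabel E f v = c}"

definition semi_H_cordial_labeling :: "'a set \<Rightarrow> 'a set set \<Rightarrow> ('a set \<Rightarrow> int) \<Rightarrow> bool" where
  "semi_H_cordial_labeling V E f \<longleftrightarrow> labeling E f
     \<and> (\<forall>v\<in>V. \<bar>vlabel E f v\<bar> \<le> 1)
     \<and> \<bar>int (e_f E f 1) - int (e_f E f (-1))\<bar> \<le> 1
     \<and> \<bar>int (v_f V E f 1) - int (v_f V E f (-1))\<bar> \<le> 1"

definition semi_H_cordial :: "'a set \<Rightarrow> 'a set set \<Rightarrow> bool" where
  "semi_H_cordial V E \<longleftrightarrow> (\<exists>f. semi_H_cordial_labeling V E f)"

end

theory Submission
  imports Defs
begin


definition sumlab :: "'a set set \<Rightarrow> ('a set \<Rightarrow> int) \<Rightarrow> int" where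
  "sumlab E f = (\<Sum>e\<in>E. f e)"

lemma adj_sym: "adj E u v = adj E v u"
  by (simp add: adj_def insert_commute)

lemma adj_in: "simple_graph V E \<Longrightarrow> adj E u v \<Longrightarrow> u \<in> V \<and> v \<in> V \<and> u \<noteq> v"
  unfolding simple_graph_def adj_def by (cases "u = v") auto

lemma sg_finE: "simple_graph V E \<Longrightarrow> finite E"
  unfolding simple_graph_def by (rule finite_subset[of E "Pow V"]) auto

lemma edge_form: "simple_graph V E \<Longrightarrow> e \<in> E \<Longrightarrow> \<exists>a b. e = {a,b} \<and> a \<noteq> b \<and> adj E a b"
proof -
  assume a: "simple_graph V E" "e \<in> E"
  then have "card e = 2" unfolding simple_graph_def by auto
  then obtain x y where "e = {x,y}" "x \<noteq> y" by (auto simp: card_2_iff)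
  then show ?thesis using a(2) unfolding adj_def by auto
qed

lemma ef_diff: assumes "finite E" "labeling E f"
  shows "int (e_f E f 1) - int (e_f E f (-1)) = sumlab E f"
proof -
  have E: "E = {e\<in>E. f e = 1} \<union> {e\<in>E. f e = -1}" using assms(2) unfolding labeling_def by auto
  have "sumlab E f = (\<Sum>e\<in>{e\<in>E. f e = 1}. f e) + (\<Sum>e\<in>{e\<in>E. f e = -1}. f e)"
    unfolding sumlab_def by (subst E, rule sum.union_disjoint) (use assms in auto)
  also have "\<dots> = (\<Sum>e\<in>{e\<in>E. f e = 1}. 1) + (\<Sum>e\<in>{e\<in>E. f e = -1}. -1)"
    by (intro arg_cong2[where f="(+)"] sum.cong) auto
  finally show ?thesis by (simp add: e_f_def)
qed

lemma ef_sum: assumes "finite E" "labeling E f"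
  shows "e_f E f 1 + e_f E f (-1) = card E"
proof -
  have E: "E = {e\<in>E. f e = 1} \<union> {e\<in>E. f e = -1}" using assms(2) unfolding labeling_def by auto
  show ?thesis unfolding e_f_def by (subst (3) E, rule card_Un_disjoint[symmetric]) (use assms in auto)
qed

lemma vsum_2: assumes "simple_graph V E"
  shows "(\<Sum>x\<in>V. vlabel E f x) = 2 * sumlab E f"
proof -
  have fE: "finite E" using sg_finE assms by blast
  have fV: "finite V" using assms simple_graph_def by blast
  have "(\<Sum>x\<in>V. vlabel E f x) = (\<Sum>x\<in>V. \<Sum>e\<in>E. if x \<in> e then f e else 0)"
    unfolding vlabel_def by (intro sum.cong refl sum.inter_filter fE)
  also have "\<dots> = (\<Sum>e\<in>E. \<Sum>x\<in>V. if x \<in> e then f e else 0)" by (rule sum.swap)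
  also have "\<dots> = (\<Sum>e\<in>E. 2 * f e)"
  proof (rule sum.cong[OF refl])
    fix e assume e: "e \<in> E"
    have "(\<Sum>x\<in>V. if x \<in> e then f e else 0) = (\<Sum>x\<in>{x\<in>V. x \<in> e}. f e)"
      by (rule sum.inter_filter[symmetric]) (rule fV)
    also have "{x\<in>V. x \<in> e} = e" using assms e unfolding simple_graph_def by auto
    finally show "(\<Sum>x\<in>V. if x \<in> e then f e else 0) = 2 * f e"
      using assms e unfolding simple_graph_def by simp
  qed
  finally show ?thesis by (simp add: sumlab_def sum_distrib_left)
qed

lemma vcount: assumes "finite V" "\<forall>x\<in>V. \<bar>g x\<bar> \<le> (1::int)"
  shows "(\<Sum>x\<in>V. g x) = int (card {x\<in>V. g x = 1}) - int (card {x\<in>V. g x = -1})"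
proof -
  have "(\<Sum>x\<in>V. g x) = (\<Sum>x\<in>V. (if g x = 1 then 1 else 0) - (if g x = -1 then 1 else 0))"
    using assms(2) by (intro sum.cong) auto
  also have "\<dots> = (\<Sum>x\<in>V. (if g x = 1 then 1 else 0)) - (\<Sum>x\<in>V. (if g x = -1 then 1 else 0))"
    by (simp add: sum_subtractf)
  also have "\<dots> = int (card {x\<in>V. g x = 1}) - int (card {x\<in>V. g x = -1})"
    by (simp add: sum.inter_filter[symmetric] assms(1))
  finally show ?thesis .
qed



definition gpath :: "'a set \<Rightarrow> 'a set set \<Rightarrow> 'a list \<Rightarrow> bool" where
  "gpath V E P \<longleftrightarrow> distinct P \<and> set P \<subseteq> V \<and> (\<forall>k. Suc k < length P \<longrightarrow> adj E (P!k) (P!Suc k))"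

lemma cyc1:
  assumes "gpath V E P" "i + 2 \<le> j" "j < length P" "adj E (P!j) (P!i)"
  shows "is_cycle E (take (Suc j - i) (drop i P))"
proof -
  let ?L = "take (Suc j - i) (drop i P)"
  have len: "length ?L = Suc j - i" using assms by auto
  have nth: "\<And>k. k < length ?L \<Longrightarrow> ?L ! k = P ! (i + k)" using assms by auto
  have ne: "?L \<noteq> []" using len assms by auto
  have "last ?L = P ! j" using nth[of "length ?L - 1"] len ne assms(2) by (simp add: last_conv_nth)
  moreover have "hd ?L = P ! i" using nth[of 0] ne by (simp add: hd_conv_nth)
  moreover have "distinct ?L" using assms(1) unfolding gpath_def by auto
  moreover have "\<forall>k. Suc k < length ?L \<longrightarrow> adj E (?L ! k) (?L ! Suc k)"
  proof (intro allI impI)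
    fix k assume k: "Suc k < length ?L"
    then have "Suc (i + k) < length P" using len assms by auto
    then show "adj E (?L ! k) (?L ! Suc k)" using nth[of k] nth[of "Suc k"] k assms(1)
      unfolding gpath_def by auto
  qed
  ultimately show ?thesis unfolding is_cycle_def using len assms by auto
qed

lemma cyc2:
  assumes "gpath V E P" "y \<notin> set P" "i < j" "j < length P" "adj E y (P!i)" "adj E (P!j) y"
  shows "is_cycle E (y # take (Suc j - i) (drop i P))"
proof -
  let ?L = "take (Suc j - i) (drop i P)"
  have len: "length ?L = Suc j - i" using assms by auto
  have nth: "\<And>k. k < length ?L \<Longrightarrow> ?L ! k = P ! (i + k)" using assms by auto
  have ne: "?L \<noteq> []" using len assms by auto
  have "last (y # ?L) = P ! j" using nth[of "length ?L - 1"] len ne assms(3) by (simp add: last_conv_nth)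
  moreover have "distinct (y # ?L)" using assms(1,2) unfolding gpath_def
    by (auto dest: in_set_takeD in_set_dropD)
  moreover have "\<forall>k. Suc k < length (y # ?L) \<longrightarrow> adj E ((y # ?L) ! k) ((y # ?L) ! Suc k)"
  proof (intro allI impI)
    fix k assume k: "Suc k < length (y # ?L)"
    show "adj E ((y # ?L) ! k) ((y # ?L) ! Suc k)"
    proof (cases k)
      case 0
      then show ?thesis using nth[of 0] ne assms(5) by simp
    next
      case (Suc m)
      then have "Suc (i + m) < length P" using len assms k by auto
      then show ?thesis using nth[of m] nth[of "Suc m"] k assms(1) Suc
        unfolding gpath_def by auto
    qed
  qed
  ultimately show ?thesis unfolding is_cycle_def using len assms by auto
qed



lemma tree_sg: "is_tree V E \<Longrightarrow> simple_graph V E"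
  by (simp add: is_tree_def)

lemma tree_finV: "is_tree V E \<Longrightarrow> finite V"
  by (simp add: is_tree_def simple_graph_def)

lemma adj_mono: "E' \<subseteq> E \<Longrightarrow> adj E' u v \<Longrightarrow> adj E u v"
  unfolding adj_def by auto

lemma cycle_mono: "E' \<subseteq> E \<Longrightarrow> is_cycle E' cs \<Longrightarrow> is_cycle E cs"
  unfolding is_cycle_def using adj_mono by metis

lemma remove_leaf:
  assumes T: "is_tree V E" and vw: "adj E v w" and leaf: "\<forall>z. adj E v z \<longrightarrow> z = w"
  shows "is_tree (V - {v}) (E - {{v,w}})" "{v,w} \<in> E" "v \<in> V" "w \<in> V" "v \<noteq> w"
    "\<forall>e\<in>E - {{v,w}}. v \<notin> e"
proof -
  have sg: "simple_graph V E" using T tree_sg by blast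
  show vwE: "{v,w} \<in> E" using vw adj_def by metis
  show "v \<in> V" "w \<in> V" "v \<noteq> w" using adj_in[OF sg vw] by auto
  show nv: "\<forall>e\<in>E - {{v,w}}. v \<notin> e"
  proof
    fix e assume e: "e \<in> E - {{v,w}}"
    show "v \<notin> e"
    proof
      assume "v \<in> e"
      obtain a b where ab: "e = {a,b}" "a \<noteq> b" "adj E a b" using edge_form[OF sg] e by blast
      have "adj E v (if a = v then b else a)" using ab \<open>v \<in> e\<close> adj_sym[of E a b] by auto
      then have "(if a = v then b else a) = w" using leaf by blast
      then have "e = {v,w}" using ab \<open>v \<in> e\<close> by auto
      then show False using e by auto
    qed
  qed
  let ?V = "V - {v}" and ?E = "E - {{v,w}}"
  have sg': "simple_graph ?V ?E" using sg nv unfolding simple_graph_def by auto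
  have ne: "?V \<noteq> {}" using \<open>w \<in> V\<close> \<open>v \<noteq> w\<close> by auto
  have ac: "acyclic_graph ?E" using T cycle_mono[of ?E E] unfolding is_tree_def acyclic_graph_def by blast
  have conn: "connected_graph ?V ?E"
    unfolding connected_graph_def
  proof (intro ballI)
    fix u u' assume u: "u \<in> ?V" and u': "u' \<in> ?V"
    have "(adj E)\<^sup>*\<^sup>* u u'" using T u u' unfolding is_tree_def connected_graph_def by auto
    then have "(u' = v \<and> (adj ?E)\<^sup>*\<^sup>* u w) \<or> (u' \<noteq> v \<and> (adj ?E)\<^sup>*\<^sup>* u u')"
    proof (induction rule: rtranclp_induct)
      case base
      then show ?case using u by auto
    next
      case (step y z)
      show ?case
      proof (cases "y = v")
        case True
        then have "z = w" using step leaf by blast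
        then show ?thesis using step True \<open>v \<noteq> w\<close> by auto
      next
        case False
        then have IH: "(adj ?E)\<^sup>*\<^sup>* u y" using step by auto
        show ?thesis
        proof (cases "z = v")
          case True
          then have "y = w" using step(2) leaf adj_sym by metis
          then show ?thesis using IH True by auto
        next
          case False
          have "adj ?E y z" using step(2) False \<open>y \<noteq> v\<close> unfolding adj_def
            by (auto simp: doubleton_eq_iff)
          then show ?thesis using IH False by auto
        qed
      qed
    qed
    then show "(adj ?E)\<^sup>*\<^sup>* u u'" using u' by auto
  qed
  show "is_tree ?V ?E" using sg' ne ac conn unfolding is_tree_def by auto
qed



lemma gpath_len: "finite V \<Longrightarrow> gpath V E P \<Longrightarrow> length P < Suc (card V)"
  unfolding gpath_def by (metis card_mono distinct_card le_imp_less_Suc)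

lemma tree_no_cycle: "is_tree V E \<Longrightarrow> is_cycle E cs \<Longrightarrow> False"
  unfolding is_tree_def acyclic_graph_def by blast

lemma tree_struct:
  assumes T: "is_tree V E" and c2: "card V \<ge> 2"
  shows "\<exists>x0 x1. adj E x0 x1 \<and> (\<forall>z. adj E x0 z \<longrightarrow> z = x1) \<and>
   ((\<exists>y. adj E x1 y \<and> y \<noteq> x0 \<and> (\<forall>z. adj E y z \<longrightarrow> z = x1)) \<or> (\<forall>z. adj E x1 z \<longrightarrow> z = x0)
     \<or> (\<exists>x2. x2 \<noteq> x0 \<and> adj E x1 x2 \<and> (\<forall>z. adj E x1 z \<longrightarrow> z = x0 \<or> z = x2)))"
proof -
  have sg: "simple_graph V E" using T tree_sg by blast
  have fV: "finite V" using T tree_finV by blast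
  obtain u where u: "u \<in> V" using c2 by fastforce
  have "card (V - {u}) \<ge> 1" using c2 u fV by auto
  then have "V - {u} \<noteq> {}" by (metis card.empty not_one_le_zero)
  then obtain u' where u': "u' \<in> V" "u' \<noteq> u" by blast
  have "(adj E)\<^sup>*\<^sup>* u u'" using T u u' unfolding is_tree_def connected_graph_def by auto
  then obtain z0 where z0: "adj E u z0" using u' by (metis converse_rtranclpE)
  have p0: "gpath V E [u, z0]" using adj_in[OF sg z0] z0 unfolding gpath_def
    by (auto simp: less_Suc_eq)
  obtain P where P: "gpath V E P" and maxP: "\<And>Q. gpath V E Q \<Longrightarrow> length Q \<le> length P"
    using Lattices_Big.ex_has_greatest_nat[of "gpath V E" "[u,z0]" length "Suc (card V)", OF p0]
      gpath_len[OF fV] by blast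
  have lenP: "length P \<ge> 2" using maxP[OF p0] by simp
  have dP: "distinct P" and sP: "set P \<subseteq> V" and aP: "\<And>k. Suc k < length P \<Longrightarrow> adj E (P!k) (P!Suc k)"
    using P unfolding gpath_def by auto
  define x0 where "x0 = P!0"
  define x1 where "x1 = P!1"
  have a01: "adj E x0 x1" using aP[of 0] lenP x0_def x1_def by auto
  have A: "\<forall>z. adj E x0 z \<longrightarrow> z = x1"
  proof (intro allI impI, rule ccontr)
    fix z assume az: "adj E x0 z" and zn: "z \<noteq> x1"
    show False
    proof (cases "z \<in> set P")
      case True
      then obtain j where j: "j < length P" "z = P!j" by (auto simp: in_set_conv_nth)
      have "j \<noteq> 0" using adj_in[OF sg az] j x0_def by (metis)
      moreover have "j \<noteq> 1" using zn j x1_def by auto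
      ultimately have "0 + 2 \<le> j" by auto
      moreover have "adj E (P!j) (P!0)" using az j x0_def adj_sym by metis
      ultimately show False using cyc1[OF P _ j(1)] tree_no_cycle[OF T] by blast
    next
      case False
      have "gpath V E (z # P)"
        unfolding gpath_def
      proof (intro conjI allI impI)
        show "distinct (z # P)" using False dP by auto
        show "set (z # P) \<subseteq> V" using sP adj_in[OF sg az] by auto
        fix k assume k: "Suc k < length (z # P)"
        show "adj E ((z # P) ! k) ((z # P) ! Suc k)"
        proof (cases k)
          case 0 then show ?thesis using az adj_sym x0_def by (metis nth_Cons_0 nth_Cons_Suc)
        next
          case (Suc m) then show ?thesis using aP[of m] k by simp
        qed
      qed
      then show False using maxP by fastforce
    qed
  qed
  show ?thesis
  proof (cases "\<exists>y. adj E x1 y \<and> y \<noteq> x0 \<and> (\<forall>z. adj E y z \<longrightarrow> z = x1)")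
    case True
    then show ?thesis using a01 A by blast
  next
    case notb1: False
    have B: "length P \<ge> 3 \<and> y = P!2" if ay: "adj E x1 y" and yn: "y \<noteq> x0" for y
    proof (rule ccontr)
      assume nb: "\<not> (length P \<ge> 3 \<and> y = P!2)"
      have yP: "y \<notin> set P"
      proof
        assume "y \<in> set P"
        then obtain j where j: "j < length P" "y = P!j" by (auto simp: in_set_conv_nth)
        have "j \<noteq> 1" using adj_in[OF sg ay] j x1_def by (metis)
        moreover have "j \<noteq> 0" using yn j x0_def by metis
        moreover have "j \<noteq> 2" using nb j by auto
        ultimately have "1 + 2 \<le> j" by auto
        moreover have "adj E (P!j) (P!1)" using ay j x1_def adj_sym by metis
        ultimately show False using cyc1[OF P _ j(1)] tree_no_cycle[OF T] by blast
      qed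
      have "\<forall>z. adj E y z \<longrightarrow> z = x1"
      proof (intro allI impI, rule ccontr)
        fix z assume az: "adj E y z" and zn: "z \<noteq> x1"
        show False
        proof (cases "z \<in> set P")
          case True
          then obtain j where j: "j < length P" "z = P!j" by (auto simp: in_set_conv_nth)
          have "j \<noteq> 1" using zn j x1_def by auto
          show False
          proof (cases "j = 0")
            case True
            have "is_cycle E (y # take (Suc 1 - 0) (drop 0 P))"
              apply (rule cyc2[OF P yP])
              using lenP az j True ay x1_def by (auto intro: adj_sym[THEN iffD1])
            then show False using tree_no_cycle[OF T] by blast
          next
            case False
            have "is_cycle E (y # take (Suc j - 1) (drop 1 P))"
              apply (rule cyc2[OF P yP])
              using \<open>j \<noteq> 1\<close> False az j ay x1_def by (auto intro: adj_sym[THEN iffD1])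
            then show False using tree_no_cycle[OF T] by blast
          qed
        next
          case False
          have stl: "set (tl P) \<subseteq> set P" by (cases P) auto
          have "gpath V E (z # y # tl P)"
            unfolding gpath_def
          proof (intro conjI allI impI)
            show "distinct (z # y # tl P)" using False yP dP adj_in[OF sg az]
              using stl by (auto simp: distinct_tl)
            show "set (z # y # tl P) \<subseteq> V" using sP adj_in[OF sg az] using stl by auto
            fix k assume k: "Suc k < length (z # y # tl P)"
            show "adj E ((z # y # tl P) ! k) ((z # y # tl P) ! Suc k)"
            proof (cases k)
              case 0 then show ?thesis using az adj_sym by (metis nth_Cons_0 nth_Cons_Suc)
            next
              case (Suc m)
              show ?thesis
              proof (cases m)
                case 0 then show ?thesis using Suc ay adj_sym[of E x1 y] x1_def lenP by (simp add: nth_tl)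
              next
                case (Suc m') then show ?thesis using \<open>k = Suc m\<close> aP[of "Suc m'"] k by (simp add: nth_tl)
              qed
            qed
          qed
          then show False using maxP lenP by fastforce
        qed
      qed
      then show False using notb1 ay yn by blast
    qed
    show ?thesis
    proof (cases "length P \<ge> 3")
      case False
      then have "\<forall>z. adj E x1 z \<longrightarrow> z = x0" using B by auto
      then show ?thesis using a01 A by blast
    next
      case True
      have "P!2 \<noteq> x0" using dP True x0_def nth_eq_iff_index_eq[OF dP, of 2 0] by fastforce
      moreover have "adj E x1 (P!2)" using aP[of 1] True x1_def by (simp add: numeral_2_eq_2)
      moreover have "\<forall>z. adj E x1 z \<longrightarrow> z = x0 \<or> z = P!2" using B by blast
      ultimately show ?thesis using a01 A by blast
    qed
  qed
qed



lemma vlabel_ins: assumes "finite E'" "e \<notin> E'"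
  shows "vlabel (insert e E') (f(e := s)) x = vlabel E' f x + (if x \<in> e then s else 0)"
proof (cases "x \<in> e")
  case True
  have "{e'\<in>insert e E'. x \<in> e'} = insert e {e'\<in>E'. x \<in> e'}" using True by auto
  moreover have "(\<Sum>e'\<in>{e'\<in>E'. x \<in> e'}. (f(e := s)) e') = (\<Sum>e'\<in>{e'\<in>E'. x \<in> e'}. f e')"
    using assms by (intro sum.cong) auto
  ultimately show ?thesis using assms True unfolding vlabel_def by simp
next
  case False
  have "{e'\<in>insert e E'. x \<in> e'} = {e'\<in>E'. x \<in> e'}" using False by auto
  moreover have "(\<Sum>e'\<in>{e'\<in>E'. x \<in> e'}. (f(e := s)) e') = (\<Sum>e'\<in>{e'\<in>E'. x \<in> e'}. f e')"
    using assms by (intro sum.cong) auto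
  ultimately show ?thesis using assms False unfolding vlabel_def by simp
qed

lemma sumlab_ins: assumes "finite E'" "e \<notin> E'"
  shows "sumlab (insert e E') (f(e := s)) = sumlab E' f + s"
proof -
  have "(\<Sum>e'\<in>E'. (f(e := s)) e') = (\<Sum>e'\<in>E'. f e')"
    using assms by (intro sum.cong) auto
  then show ?thesis using assms unfolding sumlab_def by simp
qed

lemma labeling_ins: "labeling E' f \<Longrightarrow> s \<in> {-1,1} \<Longrightarrow> labeling (insert e E') (f(e := s))"
  unfolding labeling_def by auto

lemma vlabel_out: assumes "\<forall>e\<in>E'. x \<notin> e" shows "vlabel E' f x = 0"
proof -
  have eq: "{e\<in>E'. x \<in> e} = {}" using assms by auto
  show ?thesis unfolding vlabel_def by (subst eq) simp
qed

lemma ins2: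
  assumes "finite E2" "e2 \<notin> E2" "e1 \<notin> insert e2 E2"
  shows "vlabel (insert e1 (insert e2 E2)) ((f(e2:=s2))(e1:=s1)) x
           = vlabel E2 f x + (if x\<in>e2 then s2 else 0) + (if x \<in> e1 then s1 else 0)"
    "sumlab (insert e1 (insert e2 E2)) ((f(e2:=s2))(e1:=s1)) = sumlab E2 f + s2 + s1"
  using assms by (simp_all add: vlabel_ins sumlab_ins)

lemma tree_finE: "is_tree V E \<Longrightarrow> finite E"
  using tree_sg sg_finE by blast

lemma main:
  assumes "is_tree V E"
  shows "card E + 1 = card V \<and> (\<exists>f. labeling E f \<and> (\<forall>x\<in>V. \<bar>vlabel E f x\<bar> \<le> 1) \<and> \<bar>sumlab E f\<bar> \<le> 1)"
  using assms
proof (induction "card V" arbitrary: V E rule: less_induct)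
  case less
  have T: "is_tree V E" by fact
  have sg: "simple_graph V E" using T tree_sg by blast
  have fV: "finite V" using T tree_finV by blast
  have fE: "finite E" using T tree_finE by blast
  show ?case
  proof (cases "card V \<ge> 2")
    case False
    have "V \<noteq> {}" using T unfolding is_tree_def by simp
    then have "card V > 0" using fV by (simp add: card_gt_0_iff)
    then have c1: "card V = 1" using False by linarith
    then obtain a where Va: "V = {a}" by (auto simp: card_1_singleton_iff)
    have E0: "E = {}"
    proof (rule ccontr)
      assume "E \<noteq> {}"
      then obtain e where "e \<in> E" by blast
      then obtain p q where pq: "adj E p q" using edge_form[OF sg] by blast
      show False using adj_in[OF sg pq] Va by auto
    qed
    have "labeling E (\<lambda>_. 1) \<and> (\<forall>x\<in>V. \<bar>vlabel E (\<lambda>_. 1) x\<bar> \<le> 1) \<and> \<bar>sumlab E (\<lambda>_. 1)\<bar> \<le> 1"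
      using E0 by (simp add: labeling_def vlabel_def sumlab_def)
    then show ?thesis using E0 c1 by auto
  next
    case True
    obtain x0 x1 where a01: "adj E x0 x1" and lf0: "\<forall>z. adj E x0 z \<longrightarrow> z = x1"
      and cases: "(\<exists>y. adj E x1 y \<and> y \<noteq> x0 \<and> (\<forall>z. adj E y z \<longrightarrow> z = x1)) \<or> (\<forall>z. adj E x1 z \<longrightarrow> z = x0)
     \<or> (\<exists>x2. x2 \<noteq> x0 \<and> adj E x1 x2 \<and> (\<forall>z. adj E x1 z \<longrightarrow> z = x0 \<or> z = x2))"
      using tree_struct[OF T True] by blast
    note R1 = remove_leaf[OF T a01 lf0]
    define V1 where "V1 = V - {x0}"
    define E1 where "E1 = E - {{x0,x1}}"
    have T1: "is_tree V1 E1" using R1 V1_def E1_def by simp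
    have fE1: "finite E1" using T1 tree_finE by blast
    have cV1: "card V1 = card V - 1" using R1 fV V1_def by simp
    have EE1: "E = insert {x0,x1} E1" "{x0,x1} \<notin> E1" using R1 E1_def by auto
    have nx0: "\<forall>e\<in>E1. x0 \<notin> e" using R1 E1_def by simp
    have adjE1: "adj E1 u v \<longleftrightarrow> adj E u v \<and> {u,v} \<noteq> {x0,x1}" for u v
      unfolding adj_def E1_def by auto
    consider (b1) y where "adj E x1 y" "y \<noteq> x0" "\<forall>z. adj E y z \<longrightarrow> z = x1"
      | (b2) "\<forall>z. adj E x1 z \<longrightarrow> z = x0"
      | (b3) x2 where "x2 \<noteq> x0" "adj E x1 x2" "\<forall>z. adj E x1 z \<longrightarrow> z = x0 \<or> z = x2"
      using cases by blast
    then show ?thesis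
    proof cases
      case b2
      have "card V1 < card V" using cV1 True by simp
      then have IH: "card E1 + 1 = card V1 \<and> (\<exists>f. labeling E1 f \<and> (\<forall>x\<in>V1. \<bar>vlabel E1 f x\<bar> \<le> 1) \<and> \<bar>sumlab E1 f\<bar> \<le> 1)"
        by (rule less.hyps[OF _ T1])
      obtain f1 where f1H: "labeling E1 f1 \<and> (\<forall>x\<in>V1. \<bar>vlabel E1 f1 x\<bar> \<le> 1) \<and> \<bar>sumlab E1 f1\<bar> \<le> 1"
        using conjunct2[OF IH] by (rule exE)
      note f1 = conjunct1[OF IH] conjunct1[OF f1H] conjunct1[OF conjunct2[OF f1H]] conjunct2[OF conjunct2[OF f1H]]
      have nx1: "\<forall>e\<in>E1. x1 \<notin> e"
      proof
        fix e assume e: "e \<in> E1"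
        show "x1 \<notin> e"
        proof
          assume "x1 \<in> e"
          obtain p q where pq: "e = {p,q}" "p \<noteq> q" "adj E1 p q" using edge_form[OF tree_sg[OF T1] e] by blast
          have "adj E1 x1 (if p = x1 then q else p)" using pq \<open>x1 \<in> e\<close> adj_sym[of E1 p q] by auto
          then have "adj E x1 (if p = x1 then q else p)" "{x1, if p = x1 then q else p} \<noteq> {x0,x1}"
            using adjE1 by auto
          then show False using b2 by (auto simp: insert_commute)
        qed
      qed
      define s :: int where "s = (if sumlab E1 f1 \<ge> 1 then -1 else 1)"
      define f where "f = f1({x0,x1} := s)"
      have vl: "vlabel E f x = vlabel E1 f1 x + (if x \<in> {x0,x1} then s else 0)" for x
        unfolding f_def EE1(1) by (rule vlabel_ins[OF fE1 EE1(2)])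
      have sl: "sumlab E f = sumlab E1 f1 + s"
        unfolding f_def EE1(1) by (rule sumlab_ins[OF fE1 EE1(2)])
      have "labeling E f" unfolding f_def EE1(1) by (rule labeling_ins[OF f1(2)]) (simp add: s_def)
      moreover have "\<forall>x\<in>V. \<bar>vlabel E f x\<bar> \<le> 1"
      proof
        fix x assume x: "x \<in> V"
        show "\<bar>vlabel E f x\<bar> \<le> 1"
        proof (cases "x \<in> {x0,x1}")
          case True
          then have "\<forall>e\<in>E1. x \<notin> e" using nx0 nx1 by auto
          then have "vlabel E1 f1 x = 0" by (rule vlabel_out)
          then show ?thesis using vl[of x] True s_def by simp
        next
          case False
          then show ?thesis using vl[of x] f1(3) x V1_def by auto
        qed
      qed
      moreover have "\<bar>sumlab E f\<bar> \<le> 1" using sl f1(4) s_def by auto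
      moreover have "card E + 1 = card V" using f1(1) cV1 EE1 fE1 True by simp
      ultimately show ?thesis by blast
    next
      case (b1 y)
      have "adj E y x1" using b1(1) adj_sym by metis
      moreover have "{y,x1} \<noteq> {x0,x1}" using b1(2) R1(5) by (auto simp: doubleton_eq_iff)
      ultimately have ay1: "adj E1 y x1" using adjE1 by blast
      have lfy: "\<forall>z. adj E1 y z \<longrightarrow> z = x1" using b1 adjE1 by auto
      note R2 = remove_leaf[OF T1 ay1 lfy]
      define V2 where "V2 = V1 - {y}"
      define E2 where "E2 = E1 - {{y,x1}}"
      have T2: "is_tree V2 E2" using R2 V2_def E2_def by simp
      have fE2: "finite E2" using T2 tree_finE by blast
      have cV2: "card V2 = card V - 2" using R2 fV V2_def cV1 V1_def by simp
      have EE2: "E1 = insert {y,x1} E2" "{y,x1} \<notin> E2" using R2 E2_def by auto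
      have ny: "\<forall>e\<in>E2. y \<notin> e" using R2 E2_def by simp
      have nx0': "\<forall>e\<in>E2. x0 \<notin> e" using nx0 E2_def by simp
      have "card V2 < card V" using cV2 True by simp
      then have IH: "card E2 + 1 = card V2 \<and> (\<exists>f. labeling E2 f \<and> (\<forall>x\<in>V2. \<bar>vlabel E2 f x\<bar> \<le> 1) \<and> \<bar>sumlab E2 f\<bar> \<le> 1)"
        by (rule less.hyps[OF _ T2])
      obtain f2 where f2H: "labeling E2 f2 \<and> (\<forall>x\<in>V2. \<bar>vlabel E2 f2 x\<bar> \<le> 1) \<and> \<bar>sumlab E2 f2\<bar> \<le> 1"
        using conjunct2[OF IH] by (rule exE)
      note f2 = conjunct1[OF IH] conjunct1[OF f2H] conjunct1[OF conjunct2[OF f2H]] conjunct2[OF conjunct2[OF f2H]]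
      define f where "f = (f2({y,x1} := -1))({x0,x1} := 1)"
      have EE: "E = insert {x0,x1} (insert {y,x1} E2)" "{x0,x1} \<notin> insert {y,x1} E2"
        using EE1 EE2 by auto
      have vl: "vlabel E f x = vlabel E2 f2 x + (if x \<in> {y,x1} then -1 else 0) + (if x \<in> {x0,x1} then 1 else 0)" for x
        unfolding f_def EE(1) by (rule ins2(1)[OF fE2 EE2(2) EE(2)])
      have sl: "sumlab E f = sumlab E2 f2 + (-1) + 1"
        unfolding f_def EE(1) by (rule ins2(2)[OF fE2 EE2(2) EE(2)])
      have "labeling E f" unfolding f_def EE(1) by (intro labeling_ins f2(2)) auto
      moreover have "\<forall>x\<in>V. \<bar>vlabel E f x\<bar> \<le> 1"
      proof
        fix x assume x: "x \<in> V"
        show "\<bar>vlabel E f x\<bar> \<le> 1"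
        proof (cases "x = x0 \<or> x = y")
          case True
          then have "\<forall>e\<in>E2. x \<notin> e" using nx0' ny by auto
          then have "vlabel E2 f2 x = 0" by (rule vlabel_out)
          then show ?thesis using vl[of x] True b1(2) R1(5) R2(5) by auto
        next
          case False
          then have "x \<in> V2" using x V2_def V1_def by auto
          then show ?thesis using vl[of x] f2(3) False R1(5) by auto
        qed
      qed
      moreover have "\<bar>sumlab E f\<bar> \<le> 1" using sl f2(4) by auto
      moreover have "card E + 1 = card V"
        using f2(1) cV2 EE EE2 fE2 True by simp
      ultimately show ?thesis by blast
    next
      case (b3 x2)
      have a12: "adj E1 x1 x2" using b3 adjE1 by (auto simp: doubleton_eq_iff)
      have lf1: "\<forall>z. adj E1 x1 z \<longrightarrow> z = x2" using b3 adjE1 by (auto simp: insert_commute)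
      note R2 = remove_leaf[OF T1 a12 lf1]
      define V2 where "V2 = V1 - {x1}"
      define E2 where "E2 = E1 - {{x1,x2}}"
      have T2: "is_tree V2 E2" using R2 V2_def E2_def by simp
      have fE2: "finite E2" using T2 tree_finE by blast
      have cV2: "card V2 = card V - 2" using R2 fV V2_def cV1 V1_def by simp
      have EE2: "E1 = insert {x1,x2} E2" "{x1,x2} \<notin> E2" using R2 E2_def by auto
      have nx1: "\<forall>e\<in>E2. x1 \<notin> e" using R2 E2_def by simp
      have nx0': "\<forall>e\<in>E2. x0 \<notin> e" using nx0 E2_def by simp
      have "card V2 < card V" using cV2 True by simp
      then have IH: "card E2 + 1 = card V2 \<and> (\<exists>f. labeling E2 f \<and> (\<forall>x\<in>V2. \<bar>vlabel E2 f x\<bar> \<le> 1) \<and> \<bar>sumlab E2 f\<bar> \<le> 1)"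
        by (rule less.hyps[OF _ T2])
      obtain f2 where f2H: "labeling E2 f2 \<and> (\<forall>x\<in>V2. \<bar>vlabel E2 f2 x\<bar> \<le> 1) \<and> \<bar>sumlab E2 f2\<bar> \<le> 1"
        using conjunct2[OF IH] by (rule exE)
      note f2 = conjunct1[OF IH] conjunct1[OF f2H] conjunct1[OF conjunct2[OF f2H]] conjunct2[OF conjunct2[OF f2H]]
      define s :: int where "s = (if vlabel E2 f2 x2 = 1 then -1 else 1)"
      define f where "f = (f2({x1,x2} := s))({x0,x1} := -s)"
      have EE: "E = insert {x0,x1} (insert {x1,x2} E2)" "{x0,x1} \<notin> insert {x1,x2} E2"
        using EE1 EE2 by auto
      have vl: "vlabel E f x = vlabel E2 f2 x + (if x \<in> {x1,x2} then s else 0) + (if x \<in> {x0,x1} then -s else 0)" for x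
        unfolding f_def EE(1) by (rule ins2(1)[OF fE2 EE2(2) EE(2)])
      have sl: "sumlab E f = sumlab E2 f2 + s + (-s)"
        unfolding f_def EE(1) by (rule ins2(2)[OF fE2 EE2(2) EE(2)])
      have "labeling E f" unfolding f_def EE(1) by (intro labeling_ins f2(2)) (auto simp: s_def)
      moreover have "\<forall>x\<in>V. \<bar>vlabel E f x\<bar> \<le> 1"
      proof
        fix x assume x: "x \<in> V"
        have x2V2: "x2 \<in> V2" using R2(4) R2(5) V2_def by auto
        show "\<bar>vlabel E f x\<bar> \<le> 1"
        proof (cases "x = x0 \<or> x = x1")
          case True
          then have "\<forall>e\<in>E2. x \<notin> e" using nx0' nx1 by auto
          then have "vlabel E2 f2 x = 0" by (rule vlabel_out)
          then show ?thesis using vl[of x] True b3(1) R1(5) R2(5) s_def by auto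
        next
          case False
          then have xV2: "x \<in> V2" using x V2_def V1_def by auto
          show ?thesis
          proof (cases "x = x2")
            case True
            then show ?thesis using vl[of x] f2(3) xV2 False s_def by auto
          next
            case False
            then show ?thesis using vl[of x] f2(3) xV2 \<open>\<not> (x = x0 \<or> x = x1)\<close> by auto
          qed
        qed
      qed
      moreover have "\<bar>sumlab E f\<bar> \<le> 1" using sl f2(4) by auto
      moreover have "card E + 1 = card V"
        using f2(1) cV2 EE EE2 fE2 True by simp
      ultimately show ?thesis by blast
    qed
  qed
qed



theorem theorem1:
  fixes V :: "'a set" and E :: "'a set set"
  assumes "is_tree V E"
  shows "semi_H_cordial V E \<longleftrightarrow> odd (card V)"
proof -
  have sg: "simple_graph V E" using assms tree_sg by blast
  have fV: "finite V" using assms tree_finV by blast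
  have fE: "finite E" using assms tree_finE by blast
  note MM = main[OF assms]
  have M: "card E + 1 = card V" using MM by (rule conjunct1)
  show ?thesis
  proof
    assume "semi_H_cordial V E"
    then obtain f where f: "semi_H_cordial_labeling V E f" unfolding semi_H_cordial_def by (rule exE)
    have lab: "labeling E f" and vb: "\<forall>v\<in>V. \<bar>vlabel E f v\<bar> \<le> 1"
      and vfb: "\<bar>int (v_f V E f 1) - int (v_f V E f (-1))\<bar> \<le> 1"
      using f unfolding semi_H_cordial_labeling_def by auto
    have S: "(\<Sum>x\<in>V. vlabel E f x) = 2 * sumlab E f" by (rule vsum_2[OF sg])
    have C: "(\<Sum>x\<in>V. vlabel E f x) = int (v_f V E f 1) - int (v_f V E f (-1))"
      unfolding v_f_def by (rule vcount[OF fV vb])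
    have "\<bar>2 * sumlab E f\<bar> \<le> 1" using S C vfb by simp
    then have s0: "sumlab E f = 0" by (simp add: abs_le_iff)
    have d: "int (e_f E f 1) - int (e_f E f (-1)) = sumlab E f" by (rule ef_diff[OF fE lab])
    have s: "e_f E f 1 + e_f E f (-1) = card E" by (rule ef_sum[OF fE lab])
    have "e_f E f 1 = e_f E f (-1)" using d s0 by linarith
    then have "card E = 2 * e_f E f 1" using s by linarith
    then show "odd (card V)" using M by presburger
  next
    assume odd: "odd (card V)"
    obtain f where fH: "labeling E f \<and> (\<forall>x\<in>V. \<bar>vlabel E f x\<bar> \<le> 1) \<and> \<bar>sumlab E f\<bar> \<le> 1"
      using conjunct2[OF MM] by (rule exE)
    have lab: "labeling E f" using fH by (rule conjunct1)
    have vb: "\<forall>x\<in>V. \<bar>vlabel E f x\<bar> \<le> 1" using fH by simp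
    have sb: "\<bar>sumlab E f\<bar> \<le> 1" using fH by simp
    have ev: "even (card E)" using odd M by presburger
    then obtain k where k: "card E = 2 * k" by (rule evenE)
    have d: "int (e_f E f 1) - int (e_f E f (-1)) = sumlab E f" by (rule ef_diff[OF fE lab])
    have s: "e_f E f 1 + e_f E f (-1) = card E" by (rule ef_sum[OF fE lab])
    have s': "int (e_f E f 1) + int (e_f E f (-1)) = 2 * int k" using arg_cong[OF s, of int] k by simp
    have "sumlab E f = 2 * int k - 2 * int (e_f E f (-1))" using d s' by linarith
    then have s0: "sumlab E f = 0" using sb unfolding abs_le_iff by arith
    have vs: "int (v_f V E f 1) - int (v_f V E f (-1)) = 0"
      using vsum_2[OF sg, of f] vcount[OF fV vb] s0 unfolding v_f_def by simp
    show "semi_H_cordial V E" unfolding semi_H_cordial_def semi_H_cordial_labeling_def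
      by (rule exI[of _ f]) (use lab vb d s0 vs in auto)
  qed
qed


end
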